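(* Let $R$ be a commutative ring with nonzero identity and $\delta$ an expansion of ideals of $R$. Then $\sqrt{0}$ is a $\delta$-$n$-ideal of $R$ if and only if every zero-divisor of the quotient ring $R/\sqrt{0}$ is $\delta_q$-nilpotent.
   Context: An expansion of ideals of a ring $R$ is a map $\delta$ from the set of ideals of $R$ to itself such that $I\subseteq\delta(I)$ for every ideal $I$, and $\delta(I)\subseteq\delta(J)$ whenever $I\subseteq J$. $\sqrt{0}$ denotes the nilradical of $R$. Given an expansion $\delta$, a proper ideal $I$ of $R$ is a $\delta$-$n$-ideal if whenever $a,b\in R$ with $ab\in I$ and $a\notin\sqrt{0}$, then $b\in\delta(I)$. The expansion $\delta_q$ of ideals of $R/\sqrt{0}$ is defined by $\delta_q(J/\sqrt{0})=\delta(J)/\sqrt{0}$ for ideals $J\supseteq\sqrt{0}$ of $R$. An element $x$ of $R/\sqrt{0}$ is $\delta_q$-nilpotent if $x\in\delta_q(0_{R/\sqrt{0}})$. A zero-divisor $\bar a$ of $R/\sqrt{0}$ is an element with $\bar a\bar b=0$ for some nonzero $\bar b\in R/\sqrt{0}$. *)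

theory Defs
  imports "HOL-Algebra.Algebra"
begin

definition expansion :: "('a, 'b) ring_scheme \<Rightarrow> ('a set \<Rightarrow> 'a set) \<Rightarrow> bool" where
  "expansion R \<delta> \<longleftrightarrow>
     (\<forall>I. ideal I R \<longrightarrow> ideal (\<delta> I) R \<and> I \<subseteq> \<delta> I) \<and>
     (\<forall>I J. ideal I R \<longrightarrow> ideal J R \<longrightarrow> I \<subseteq> J \<longrightarrow> \<delta> I \<subseteq> \<delta> J)"

definition nilradical :: "('a, 'b) ring_scheme \<Rightarrow> 'a set" where
  "nilradical R = {a \<in> carrier R. \<exists>n::nat. a [^]\<^bsub>R\<^esub> n = \<zero>\<^bsub>R\<^esub>}"

definition delta_n_ideal :: "('a, 'b) ring_scheme \<Rightarrow> ('a set \<Rightarrow> 'a set) \<Rightarrow> 'a set \<Rightarrow> bool" where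
  "delta_n_ideal R \<delta> I \<longleftrightarrow> ideal I R \<and> I \<noteq> carrier R \<and>
     (\<forall>a \<in> carrier R. \<forall>b \<in> carrier R.
        a \<otimes>\<^bsub>R\<^esub> b \<in> I \<longrightarrow> a \<notin> nilradical R \<longrightarrow> b \<in> \<delta> I)"

(* For an ideal J of R containing N, the ideal J/N of R Quot N *)
definition quot_ideal :: "('a, 'b) ring_scheme \<Rightarrow> 'a set \<Rightarrow> 'a set \<Rightarrow> 'a set set" where
  "quot_ideal R N J = (\<lambda>x. N +>\<^bsub>R\<^esub> x) ` J"

(* delta_q(J/sqrt0) = delta(J)/sqrt0; every ideal J' of R/sqrt0 is J/sqrt0 with J = \<Union>J' *)
definition delta_q :: "('a, 'b) ring_scheme \<Rightarrow> ('a set \<Rightarrow> 'a set) \<Rightarrow> 'a set set \<Rightarrow> 'a set set" where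
  "delta_q R \<delta> J' = quot_ideal R (nilradical R) (\<delta> (\<Union> J'))"

definition zero_divisor :: "('c, 'd) ring_scheme \<Rightarrow> 'c \<Rightarrow> bool" where
  "zero_divisor S x \<longleftrightarrow> x \<in> carrier S \<and>
     (\<exists>y \<in> carrier S. y \<noteq> \<zero>\<^bsub>S\<^esub> \<and> x \<otimes>\<^bsub>S\<^esub> y = \<zero>\<^bsub>S\<^esub>)"

definition delta_q_nilpotent :: "('a, 'b) ring_scheme \<Rightarrow> ('a set \<Rightarrow> 'a set) \<Rightarrow> 'a set \<Rightarrow> bool" where
  "delta_q_nilpotent R \<delta> x \<longleftrightarrow>
     x \<in> delta_q R \<delta> {\<zero>\<^bsub>R Quot (nilradical R)\<^esub>}"

end

theory Submission
  imports Defs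
begin

lemma (in cring) colon_ideal:
  assumes "ideal J R" "c \<in> carrier R"
  shows "ideal {w \<in> carrier R. w \<otimes> c \<in> J} R"
proof -
  interpret J: ideal J R by fact
  show ?thesis
  proof (rule idealI)
    show "ring R" by (rule ring_axioms)
    show "subgroup {w \<in> carrier R. w \<otimes> c \<in> J} (add_monoid R)"
    proof (rule add.subgroupI)
      show "{w \<in> carrier R. w \<otimes> c \<in> J} \<noteq> {}" using assms by (auto intro!: exI[of _ \<zero>])
      fix a assume "a \<in> {w \<in> carrier R. w \<otimes> c \<in> J}"
      then show "\<ominus> a \<in> {w \<in> carrier R. w \<otimes> c \<in> J}"
        using assms by (simp add: l_minus J.a_inv_closed)
    next
      fix a b assume "a \<in> {w \<in> carrier R. w \<otimes> c \<in> J}" "b \<in> {w \<in> carrier R. w \<otimes> c \<in> J}"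
      then show "a \<oplus> b \<in> {w \<in> carrier R. w \<otimes> c \<in> J}"
        using assms by (simp add: l_distr J.a_closed)
    qed auto
  next
    fix a x assume "a \<in> {w \<in> carrier R. w \<otimes> c \<in> J}" "x \<in> carrier R"
    then show "x \<otimes> a \<in> {w \<in> carrier R. w \<otimes> c \<in> J}"
      using assms by (simp add: m_assoc J.I_l_closed)
  next
    fix a x assume a: "a \<in> {w \<in> carrier R. w \<otimes> c \<in> J}" and x: "x \<in> carrier R"
    have "a \<otimes> x \<otimes> c = x \<otimes> (a \<otimes> c)" using a x assms by (simp add: m_assoc m_lcomm)
    then show "a \<otimes> x \<in> {w \<in> carrier R. w \<otimes> c \<in> J}"
      using a x by (simp add: J.I_l_closed)
  qed
qed

lemma (in cring) nil_add_aux: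
  assumes x: "x \<in> carrier R" and y: "y \<in> carrier R"
  shows "\<forall>J. ideal J R \<longrightarrow> {x [^] i \<otimes> y [^] j | i j. i + j = (k::nat)} \<subseteq> J \<longrightarrow> (x \<oplus> y) [^] k \<in> J"
proof (induction k)
  case 0
  show ?case
  proof (intro allI impI)
    fix J assume "ideal J R" "{x [^] i \<otimes> y [^] j | i j. i + j = (0::nat)} \<subseteq> J"
    then have "x [^] (0::nat) \<otimes> y [^] (0::nat) \<in> J" by blast
    then show "(x \<oplus> y) [^] (0::nat) \<in> J" by simp
  qed
next
  case (Suc k)
  show ?case
  proof (intro allI impI)
    fix J assume J: "ideal J R" and G: "{x [^] i \<otimes> y [^] j | i j. i + j = Suc k} \<subseteq> J"
    interpret J: ideal J R by fact
    have "(x \<oplus> y) [^] k \<in> {w \<in> carrier R. w \<otimes> x \<in> J}"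
    proof (rule Suc[rule_format, OF colon_ideal[OF J x]], safe)
      fix i j assume "k = i + j"
      have "x [^] i \<otimes> y [^] j \<otimes> x = x [^] Suc i \<otimes> y [^] j"
        using x y by (simp add: m_assoc m_comm m_lcomm)
      moreover have "Suc i + j = Suc k" using \<open>k = i + j\<close> by simp
      then have "x [^] Suc i \<otimes> y [^] j \<in> J" using G by blast
      ultimately show "x [^] i \<otimes> y [^] j \<otimes> x \<in> J" by simp
    qed (use x y in auto)
    moreover have "(x \<oplus> y) [^] k \<in> {w \<in> carrier R. w \<otimes> y \<in> J}"
    proof (rule Suc[rule_format, OF colon_ideal[OF J y]], safe)
      fix i j assume "k = i + j"
      have "x [^] i \<otimes> y [^] j \<otimes> y = x [^] i \<otimes> y [^] Suc j"
        using x y by (simp add: m_assoc)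
      moreover have "i + Suc j = Suc k" using \<open>k = i + j\<close> by simp
      then have "x [^] i \<otimes> y [^] Suc j \<in> J" using G by blast
      ultimately show "x [^] i \<otimes> y [^] j \<otimes> y \<in> J" by simp
    qed (use x y in auto)
    moreover have "(x \<oplus> y) [^] Suc k = (x \<oplus> y) [^] k \<otimes> x \<oplus> (x \<oplus> y) [^] k \<otimes> y"
      using x y by (simp add: r_distr)
    ultimately show "(x \<oplus> y) [^] Suc k \<in> J" by (simp add: J.a_closed)
  qed
qed

lemma (in cring) nil_add:
  assumes x: "x \<in> carrier R" and y: "y \<in> carrier R"
    and "x [^] (m::nat) = \<zero>" "y [^] (n::nat) = \<zero>"
  shows "(x \<oplus> y) [^] (m + n) = \<zero>"
proof -
  have "{x [^] i \<otimes> y [^] j | i j. i + j = m + n} \<subseteq> {\<zero>}"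
  proof safe
    fix i j :: nat assume "i + j = m + n"
    then have "m \<le> i \<or> n \<le> j" by arith
    then show "x [^] i \<otimes> y [^] j = \<zero>"
    proof
      assume "m \<le> i"
      then have "x [^] i = x [^] m \<otimes> x [^] (i - m)" using x by (simp add: nat_pow_mult)
      then show ?thesis using assms by simp
    next
      assume "n \<le> j"
      then have "y [^] j = y [^] n \<otimes> y [^] (j - n)" using y by (simp add: nat_pow_mult)
      then show ?thesis using assms by simp
    qed
  qed
  then show ?thesis using nil_add_aux[OF x y, rule_format, OF zeroideal] by blast
qed

lemma (in cring) nil_mult:
  assumes "x \<in> carrier R" "r \<in> carrier R" "x [^] (n::nat) = \<zero>"
  shows "(r \<otimes> x) [^] n = \<zero>"
  using assms by (simp add: pow_mult_distrib m_comm)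

lemma (in cring) nilradical_ideal: "ideal (nilradical R) R"
proof (rule idealI)
  show "ring R" by (rule ring_axioms)
  show "subgroup (nilradical R) (add_monoid R)"
  proof (rule add.subgroupI)
    show "nilradical R \<subseteq> carrier R" unfolding nilradical_def by auto
    show "nilradical R \<noteq> {}" unfolding nilradical_def
      by (auto intro!: exI[of _ \<zero>] exI[of _ "1::nat"])
    fix a assume "a \<in> nilradical R"
    then obtain n where a: "a \<in> carrier R" "a [^] (n::nat) = \<zero>" unfolding nilradical_def by auto
    have "(\<ominus> \<one> \<otimes> a) [^] n = \<zero>" by (rule nil_mult) (use a in auto)
    then show "\<ominus> a \<in> nilradical R" unfolding nilradical_def using a
      by (auto simp: l_minus)
  next
    fix a b assume "a \<in> nilradical R" "b \<in> nilradical R"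
    then obtain m n where "a \<in> carrier R" "a [^] (m::nat) = \<zero>" "b \<in> carrier R" "b [^] (n::nat) = \<zero>"
      unfolding nilradical_def by auto
    then show "a \<oplus> b \<in> nilradical R" unfolding nilradical_def
      using nil_add by blast
  qed
next
  fix a x assume "a \<in> nilradical R" "x \<in> carrier R"
  then show "x \<otimes> a \<in> nilradical R" unfolding nilradical_def using nil_mult by blast
next
  fix a x assume "a \<in> nilradical R" "x \<in> carrier R"
  then obtain n where a: "a \<in> carrier R" "a [^] (n::nat) = \<zero>" unfolding nilradical_def by auto
  have "(x \<otimes> a) [^] n = \<zero>" using nil_mult a \<open>x \<in> carrier R\<close> by blast
  then show "a \<otimes> x \<in> nilradical R" unfolding nilradical_def using a \<open>x \<in> carrier R\<close>
    by (auto simp: m_comm)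
qed

theorem proposition2p15:
  fixes R (structure) and \<delta> :: "'a set \<Rightarrow> 'a set"
  assumes "cring R" and "\<one> \<noteq> \<zero>" and "expansion R \<delta>"
  shows "delta_n_ideal R \<delta> (nilradical R) \<longleftrightarrow>
    (\<forall>x. zero_divisor (R Quot (nilradical R)) x \<longrightarrow> delta_q_nilpotent R \<delta> x)"
proof -
  interpret cring R by fact
  define N where "N = nilradical R"
  have idN: "ideal N R" unfolding N_def by (rule nilradical_ideal)
  interpret N: ideal N R by (rule idN)
  have abN: "abelian_subgroup N R"
    using abelian_subgroupI3[OF ideal.axioms(1)[OF idN] is_abelian_group] .
  have dN: "ideal (\<delta> N) R" "N \<subseteq> \<delta> N" using assms(3) idN unfolding expansion_def by auto
  have cosN: "N +> a = N \<longleftrightarrow> a \<in> N" if "a \<in> carrier R" for a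
    using that abelian_subgroup.a_rcos_const[OF abN] N.a_rcos_self by metis
  have one: "\<one> \<notin> N" unfolding N_def nilradical_def using assms(2) by auto
  then have Nne: "N \<noteq> carrier R" by auto
  have carQ: "carrier (R Quot N) = {N +> a | a. a \<in> carrier R}"
    by (auto simp: FactRing_def A_RCOSETS_defs a_r_coset_def[symmetric])
  have zeroQ: "\<zero>\<^bsub>R Quot N\<^esub> = N" by (simp add: FactRing_def)
  have multQ: "(N +> a) \<otimes>\<^bsub>R Quot N\<^esub> (N +> b) = N +> (a \<otimes> b)" if "a \<in> carrier R" "b \<in> carrier R" for a b
    using N.rcoset_mult_add[OF that] by (simp add: FactRing_def)
  have dq: "delta_q R \<delta> {\<zero>\<^bsub>R Quot N\<^esub>} = (\<lambda>x. N +> x) ` \<delta> N"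
    unfolding delta_q_def quot_ideal_def zeroQ by (simp add: N_def)
  have zd: "zero_divisor (R Quot N) x \<longleftrightarrow>
      (\<exists>a b. a \<in> carrier R \<and> b \<in> carrier R \<and> x = N +> a \<and> b \<notin> N \<and> a \<otimes> b \<in> N)" for x
  proof
    assume "zero_divisor (R Quot N) x"
    then obtain a y where a: "a \<in> carrier R" "x = N +> a" and y: "y \<in> carrier (R Quot N)"
      "y \<noteq> N" "x \<otimes>\<^bsub>R Quot N\<^esub> y = N"
      unfolding zero_divisor_def zeroQ carQ by auto
    then obtain b where b: "b \<in> carrier R" "y = N +> b" unfolding carQ by auto
    show "\<exists>a b. a \<in> carrier R \<and> b \<in> carrier R \<and> x = N +> a \<and> b \<notin> N \<and> a \<otimes> b \<in> N"
      using a b y multQ cosN by (intro exI[of _ a] exI[of _ b]) auto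
  next
    assume "\<exists>a b. a \<in> carrier R \<and> b \<in> carrier R \<and> x = N +> a \<and> b \<notin> N \<and> a \<otimes> b \<in> N"
    then obtain a b where ab: "a \<in> carrier R" "b \<in> carrier R" "x = N +> a" "b \<notin> N" "a \<otimes> b \<in> N" by auto
    show "zero_divisor (R Quot N) x" unfolding zero_divisor_def zeroQ
    proof (intro conjI bexI[of _ "N +> b"])
      show "x \<in> carrier (R Quot N)" using ab carQ by auto
      show "N +> b \<in> carrier (R Quot N)" using ab carQ by auto
      show "N +> b \<noteq> N" using ab cosN by auto
      show "x \<otimes>\<^bsub>R Quot N\<^esub> (N +> b) = N" using ab multQ cosN by auto
    qed
  qed
  have dqn: "delta_q_nilpotent R \<delta> x \<longleftrightarrow> x \<in> (\<lambda>x. N +> x) ` \<delta> N" for x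
    unfolding delta_q_nilpotent_def using dq N_def by simp
  show ?thesis
    unfolding N_def[symmetric] zd dqn
  proof
    assume H: "delta_n_ideal R \<delta> N"
    show "\<forall>x. (\<exists>a b. a \<in> carrier R \<and> b \<in> carrier R \<and> x = N +> a \<and> b \<notin> N \<and> a \<otimes> b \<in> N) \<longrightarrow>
        x \<in> (+>) N ` \<delta> N"
    proof (intro allI impI)
      fix x assume "\<exists>a b. a \<in> carrier R \<and> b \<in> carrier R \<and> x = N +> a \<and> b \<notin> N \<and> a \<otimes> b \<in> N"
      then obtain a b where ab: "a \<in> carrier R" "b \<in> carrier R" "x = N +> a" "b \<notin> N" "a \<otimes> b \<in> N" by auto
      have "b \<otimes> a \<in> N" using ab by (simp add: m_comm)
      then have "a \<in> \<delta> N" using H ab unfolding delta_n_ideal_def N_def by blast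
      then show "x \<in> (+>) N ` \<delta> N" using ab by auto
    qed
  next
    assume H: "\<forall>x. (\<exists>a b. a \<in> carrier R \<and> b \<in> carrier R \<and> x = N +> a \<and> b \<notin> N \<and> a \<otimes> b \<in> N) \<longrightarrow>
        x \<in> (+>) N ` \<delta> N"
    show "delta_n_ideal R \<delta> N" unfolding delta_n_ideal_def
    proof (intro conjI ballI impI idN Nne)
      fix a b assume ab: "a \<in> carrier R" "b \<in> carrier R" "a \<otimes> b \<in> N" "a \<notin> nilradical R"
      have "b \<otimes> a \<in> N" using ab by (simp add: m_comm)
      then have "N +> b \<in> (+>) N ` \<delta> N" using H ab N_def by blast
      then obtain c where c: "c \<in> \<delta> N" "N +> b = N +> c" by auto
      interpret D: ideal "\<delta> N" R by (rule dN(1))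
      have cc: "c \<in> carrier R" using c D.a_Hcarr by blast
      have "b \<in> N +> c" using c N.a_rcos_self ab by metis
      then have "b \<ominus> c \<in> N" using abelian_subgroup.a_rcos_module_minus[OF abN ring_axioms cc ab(2)] by simp
      then have "b \<ominus> c \<in> \<delta> N" using dN by auto
      then have "(b \<ominus> c) \<oplus> c \<in> \<delta> N" using c D.a_closed by blast
      moreover have "(b \<ominus> c) \<oplus> c = b" using ab cc by algebra
      ultimately show "b \<in> \<delta> N" by simp
    qed
  qed
qed

end
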